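(* Let $p,q$ be integers with $2\le p<q\le5p-1$ and fix $\beta_3\ge0$. Let $r_{\beta_3}$ be the transition curve: for $\beta_1<\beta_1^c$, $r_{\beta_3}(\beta_1)$ is the unique value of $\beta_2$ for which $u\mapsto l(u)=\beta_1u+\beta_2u^p+\beta_3u^q-\tfrac12u\log u-\tfrac12(1-u)\log(1-u)$ has two distinct global maximizers on $[0,1]$. Then $$\lim_{\beta_1\to-\infty}\big|r_{\beta_3}(\beta_1)+\beta_1+\beta_3\big|=0.$$
   Context: Here $\beta_1^c=\tfrac12\log\tfrac{u_0}{1-u_0}-\tfrac{1}{2(p-1)(1-u_0)}+\tfrac{pu_0-(p-1)}{2(p-1)(q-1)(1-u_0)^2}$, where $u_0\in(0,1)$ is the unique solution of $\beta_3=\frac{pu_0-(p-1)}{2q(q-1)(q-p)u_0^{q-1}(1-u_0)^2}$; existence and uniqueness of $r_{\beta_3}(\beta_1)$ for each $\beta_1<\beta_1^c$ is part of the standing setup. *)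

theory Defs
  imports Complex_Main
begin

text \<open>The function l(u) = b1 u + b2 u^p + b3 u^q - 1/2 u log u - 1/2 (1-u) log(1-u) on [0,1].
  Convention: 0 * ln 0 = 0 (in Isabelle ln 0 = 0), the usual continuous extension.\<close>
definition lfun :: "nat \<Rightarrow> nat \<Rightarrow> real \<Rightarrow> real \<Rightarrow> real \<Rightarrow> real \<Rightarrow> real" where
  "lfun p q b1 b2 b3 u = b1 * u + b2 * u ^ p + b3 * u ^ q
      - (1/2) * u * ln u - (1/2) * (1 - u) * ln (1 - u)"

definition is_global_max :: "nat \<Rightarrow> nat \<Rightarrow> real \<Rightarrow> real \<Rightarrow> real \<Rightarrow> real \<Rightarrow> bool" where
  "is_global_max p q b1 b2 b3 u \<longleftrightarrow>
     u \<in> {0..1} \<and> (\<forall>v\<in>{0..1}. lfun p q b1 b2 b3 v \<le> lfun p q b1 b2 b3 u)"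

definition two_maximizers :: "nat \<Rightarrow> nat \<Rightarrow> real \<Rightarrow> real \<Rightarrow> real \<Rightarrow> bool" where
  "two_maximizers p q b1 b2 b3 \<longleftrightarrow>
     (\<exists>u v. u \<noteq> v \<and> is_global_max p q b1 b2 b3 u \<and> is_global_max p q b1 b2 b3 v)"

definition u0 :: "nat \<Rightarrow> nat \<Rightarrow> real \<Rightarrow> real" where
  "u0 p q b3 = (THE u. 0 < u \<and> u < 1 \<and>
      b3 = (real p * u - (real p - 1)) /
           (2 * real q * (real q - 1) * (real q - real p) * u ^ (q - 1) * (1 - u)^2))"

definition beta1c :: "nat \<Rightarrow> nat \<Rightarrow> real \<Rightarrow> real" where
  "beta1c p q b3 = (let u = u0 p q b3 in
      (1/2) * ln (u / (1 - u)) - 1 / (2 * (real p - 1) * (1 - u))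
      + (real p * u - (real p - 1)) / (2 * (real p - 1) * (real q - 1) * (1 - u)^2))"

definition transition_curve :: "nat \<Rightarrow> nat \<Rightarrow> real \<Rightarrow> real \<Rightarrow> real" where
  "transition_curve p q b3 b1 = (THE b2. two_maximizers p q b1 b2 b3)"

end

theory Submission imports Defs "HOL-Real_Asymp.Real_Asymp" begin

definition Hf :: "real \<Rightarrow> real" where
  "Hf w = - (1/2) * w * ln w - (1/2) * (1 - w) * ln (1 - w)"

definition dl :: "nat \<Rightarrow> nat \<Rightarrow> real \<Rightarrow> real \<Rightarrow> real \<Rightarrow> real \<Rightarrow> real" where
  "dl p q b1 b2 b3 u = b1 + real p * b2 * u^(p-1) + real q * b3 * u^(q-1) + (ln (1-u) - ln u)/2"

lemma lfun_Hf: "lfun p q b1 b2 b3 u = b1*u + b2*u^p + b3*u^q + Hf u"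
  unfolding lfun_def Hf_def by simp

lemma lfun_deriv:
  assumes "0 < u" "u < 1"
  shows "((\<lambda>u. lfun p q b1 b2 b3 u) has_real_derivative dl p q b1 b2 b3 u) (at u)"
proof -
  have d1: "((\<lambda>u. b1*u + b2*u^p + b3*u^q) has_real_derivative
      b1 + b2*(real p*u^(p-1)) + b3*(real q*u^(q-1))) (at u)"
    by (auto intro!: derivative_eq_intros)
  have d2: "((\<lambda>u. - (1/2)*u*ln u) has_real_derivative -(1/2)*(ln u + 1)) (at u)"
    using assms by (auto intro!: derivative_eq_intros simp: algebra_simps)
  have d3: "((\<lambda>u. - (1/2)*(1-u)*ln(1-u)) has_real_derivative (1/2)*(ln(1-u) + 1)) (at u)"
    using assms by (auto intro!: derivative_eq_intros simp: field_simps)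
  have "((\<lambda>u. (b1*u + b2*u^p + b3*u^q) + (- (1/2)*u*ln u) + (- (1/2)*(1-u)*ln(1-u)))
     has_real_derivative (b1 + b2*(real p*u^(p-1)) + b3*(real q*u^(q-1))) + (-(1/2)*(ln u + 1))
       + (1/2)*(ln(1-u) + 1)) (at u)"
    by (intro DERIV_add d1 d2 d3)
  moreover have "(\<lambda>u. (b1*u + b2*u^p + b3*u^q) + (- (1/2)*u*ln u) + (- (1/2)*(1-u)*ln(1-u)))
     = (\<lambda>u. lfun p q b1 b2 b3 u)" unfolding lfun_def by (auto simp: algebra_simps)
  moreover have "(b1 + b2*(real p*u^(p-1)) + b3*(real q*u^(q-1))) + (-(1/2)*(ln u + 1))
       + (1/2)*(ln(1-u) + 1) = dl p q b1 b2 b3 u" unfolding dl_def by (simp add: field_simps)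
  ultimately show ?thesis by simp
qed

lemma negxlnx_le: fixes x :: real assumes "0 < x" shows "- (x * ln x) \<le> 1 - x"
proof -
  have "ln (1/x) \<le> 1/x - 1" using assms by (intro ln_le_minus_one) auto
  hence "- ln x \<le> 1/x - 1" using assms by (simp add: ln_div)
  hence "x * (- ln x) \<le> x * (1/x - 1)" using assms by (intro mult_left_mono) auto
  moreover have "x * (1/x - 1) = 1 - x" using assms by (simp add: field_simps)
  ultimately show ?thesis by simp
qed

lemma negxlnx_sqrt: fixes x :: real assumes "0 < x" shows "- (x * ln x) \<le> 2 * sqrt x"
proof -
  have s: "0 < sqrt x" using assms by simp
  have l: "ln x = 2 * ln (sqrt x)" using assms
    by (simp add: ln_sqrt)
  have a: "- (sqrt x * ln (sqrt x)) \<le> 1 - sqrt x" using negxlnx_le[OF s] .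
  have "- (x * ln x) = 2 * sqrt x * (- (sqrt x * ln (sqrt x)))"
    using l assms by (simp add: algebra_simps)
  also have "\<dots> \<le> 2 * sqrt x * (1 - sqrt x)"
    using a s by (intro mult_left_mono) auto
  also have "\<dots> \<le> 2 * sqrt x" using s by (simp add: algebra_simps)
  finally show ?thesis .
qed

lemma pow_le_sq: fixes w :: real assumes "0 \<le> w" "w \<le> 1" "2 \<le> k" shows "w^k \<le> w^2"
  using power_decreasing[OF assms(3) assms(1) assms(2)] .

lemma pow_diff_le: fixes x y :: real assumes "0 \<le> x" "x \<le> y" "y \<le> 1"
  shows "y^k - x^k \<le> real k * (y - x)"
proof (induction k)
  case 0 then show ?case by simp
next
  case (Suc k)
  have m: "x^k \<le> y^k" using assms by (intro power_mono) auto
  have x1: "x^k \<le> 1" using assms by (intro power_le_one) auto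
  have "y^Suc k - x^Suc k = y*(y^k - x^k) + x^k*(y-x)" by (simp add: algebra_simps)
  also have "\<dots> \<le> 1*(y^k - x^k) + 1*(y-x)"
    using m x1 assms by (intro add_mono mult_right_mono mult_mono) auto
  also have "\<dots> \<le> real (Suc k) * (y - x)" using Suc by (simp add: algebra_simps)
  finally show ?case .
qed

lemma Hf_split: "Hf w = (1/2) * (- (w * ln w)) + (1/2) * (- ((1-w) * ln (1-w)))"
  unfolding Hf_def by (simp add: field_simps)

lemma le_sqrt_self: fixes w :: real assumes "0 \<le> w" "w \<le> 1" shows "w \<le> sqrt w"
proof -
  have "sqrt w \<le> 1" using assms by simp
  hence "sqrt w * sqrt w \<le> 1 * sqrt w" using assms by (intro mult_right_mono) auto
  thus ?thesis using assms by simp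
qed

lemma Hf_le1: assumes "0 < w" "w < 1" shows "Hf w \<le> (1/2) * (- (w * ln w)) + w/2"
proof -
  have "- ((1-w) * ln (1-w)) \<le> 1 - (1-w)" using assms by (intro negxlnx_le) auto
  thus ?thesis using Hf_split[of w] by linarith
qed

lemma Hf_le2: assumes "0 < w" "w < 1" shows "Hf w \<le> (1/2) * (- ((1-w) * ln (1-w))) + (1-w)/2"
proof -
  have a: "- (w * ln w) \<le> 1 - w" using assms by (intro negxlnx_le) auto
  define c where "c = (1-w) * ln (1-w)"
  have "Hf w = 1/2 * - (w * ln w) + 1/2 * - c" using Hf_split[of w] unfolding c_def .
  thus ?thesis using a unfolding c_def[symmetric] by argo
qed

lemma Hf_half: assumes "0 < w" "w < 1" shows "Hf w \<le> 1/2"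
proof -
  have "- (w * ln w) \<le> 1 - w" using assms by (intro negxlnx_le) auto
  moreover have "- ((1-w) * ln (1-w)) \<le> 1 - (1-w)" using assms by (intro negxlnx_le) auto
  ultimately show ?thesis using Hf_split[of w] by linarith
qed

lemma Hf_sqrt1: assumes "0 < w" "w < 1" shows "Hf w \<le> 3/2 * sqrt w"
proof -
  have "- (w * ln w) \<le> 2 * sqrt w" using assms by (intro negxlnx_sqrt) auto
  moreover have "w \<le> sqrt w" using assms by (intro le_sqrt_self) auto
  moreover have "- ((1-w) * ln (1-w)) \<le> 1 - (1-w)" using assms by (intro negxlnx_le) auto
  ultimately show ?thesis using Hf_split[of w] by linarith
qed

lemma Hf_sqrt2: assumes "0 < w" "w < 1" shows "Hf w \<le> 3/2 * sqrt (1-w)"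
proof -
  have "- ((1-w) * ln (1-w)) \<le> 2 * sqrt (1-w)" using assms by (intro negxlnx_sqrt) auto
  moreover have "1-w \<le> sqrt (1-w)" using assms by (intro le_sqrt_self) auto
  moreover have "- (w * ln w) \<le> 1 - w" using assms by (intro negxlnx_le) auto
  ultimately show ?thesis using Hf_split[of w] by linarith
qed

lemma le_exp_of_ln: fixes x c :: real assumes "0 < x" "c \<le> 1 - ln x" shows "x \<le> exp (1 - c)"
proof -
  have "ln x \<le> 1 - c" using assms by simp
  hence "exp (ln x) \<le> exp (1 - c)" by simp
  thus ?thesis using assms by simp
qed

lemma lfun_0: "1 \<le> p \<Longrightarrow> 1 \<le> q \<Longrightarrow> lfun p q b1 b2 b3 0 = 0"
  unfolding lfun_def by (simp add: power_0_left)

lemma lfun_1: "lfun p q b1 b2 b3 1 = b1 + b2 + b3"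
  unfolding lfun_def by simp

lemma abs_pow_bound: fixes x b :: real assumes "0 < x" "x \<le> 1" "1 \<le> k"
  shows "- (\<bar>b\<bar> * x) \<le> b * x^k"
proof -
  have "x^k \<le> x^1" using assms by (intro power_decreasing) auto
  hence "\<bar>b\<bar> * x^k \<le> \<bar>b\<bar> * x" by (intro mult_left_mono) auto
  moreover have "\<bar>b * x^k\<bar> = \<bar>b\<bar> * x^k" using assms by (simp add: abs_mult)
  ultimately show ?thesis by linarith
qed

lemma lfun_assoc: "lfun p q b1 b2 b3 x = b1*x + b2*x^p + b3*x^q - (1/2)*(x*ln x) - (1/2)*((1-x)*ln(1-x))"
  unfolding lfun_def by (simp only: mult.assoc)

lemma near0:
  assumes "1 \<le> p" "1 \<le> q"
  shows "\<exists>x. 0 < x \<and> x < 1 \<and> lfun p q b1 b2 b3 x > 0"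
proof -
  define A where "A = \<bar>b1\<bar> + \<bar>b2\<bar> + \<bar>b3\<bar>"
  have A0: "0 \<le> A" unfolding A_def by simp
  define x where "x = exp (-2*A-1)"
  have x0: "0 < x" unfolding x_def by simp
  have x1: "x < 1" unfolding x_def using A0 by simp
  have lx: "x * ln x = -(2*A+1)*x" unfolding x_def by simp
  have l1x: "ln (1-x) \<le> 0" using x0 x1 by simp
  have "0 \<le> (1-x) * (- ln (1-x))" using x1 l1x by (intro mult_nonneg_nonneg) auto
  hence t: "(1-x)*ln(1-x) \<le> 0" by simp
  have a1: "- (\<bar>b1\<bar> * x) \<le> b1 * x^1" using x0 x1 by (intro abs_pow_bound) auto
  have a2: "- (\<bar>b2\<bar> * x) \<le> b2 * x^p" using x0 x1 assms by (intro abs_pow_bound) auto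
  have a3: "- (\<bar>b3\<bar> * x) \<le> b3 * x^q" using x0 x1 assms by (intro abs_pow_bound) auto
  have "A * x = \<bar>b1\<bar> * x + \<bar>b2\<bar> * x + \<bar>b3\<bar> * x" unfolding A_def by (simp add: algebra_simps)
  hence "lfun p q b1 b2 b3 x \<ge> x/2"
    using a1 a2 a3 lx t unfolding lfun_assoc by (simp add: algebra_simps) 
  thus ?thesis using x0 x1 by (intro exI[of _ x]) auto
qed

lemma near1:
  shows "\<exists>x. 0 < x \<and> x < 1 \<and> lfun p q b1 b2 b3 x > b1 + b2 + b3"
proof -
  define A where "A = \<bar>b1\<bar> + real p * \<bar>b2\<bar> + real q * \<bar>b3\<bar>"
  have A0: "0 \<le> A" unfolding A_def by simp
  define e where "e = exp (-2*A-1)"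
  have e0: "0 < e" unfolding e_def by simp
  have e1: "e < 1" unfolding e_def using A0 by simp
  define x where "x = 1 - e"
  have le: "e * ln e = -(2*A+1)*e" unfolding e_def by simp
  have lx: "ln x \<le> 0" using e0 e1 unfolding x_def by simp
  have "0 \<le> x * (- ln x)" using e1 lx unfolding x_def by (intro mult_nonneg_nonneg) auto
  hence t: "x * ln x \<le> 0" by simp
  have pw: "\<bar>x^k - 1\<bar> \<le> real k * e" for k
  proof -
    have "1 + real k * (-e) \<le> (1 + (-e))^k" using e1 by (intro Bernoulli_inequality) auto
    moreover have "x^k \<le> 1" using e0 e1 unfolding x_def by (intro power_le_one) auto
    ultimately show ?thesis unfolding x_def by auto
  qed
  have bb: "- (\<bar>b\<bar> * (real k * e)) \<le> b * (x^k - 1)" for b :: real and k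
  proof -
    have "\<bar>b * (x^k - 1)\<bar> \<le> \<bar>b\<bar> * (real k * e)" unfolding abs_mult
      using pw[of k] by (intro mult_left_mono) auto
    thus ?thesis by linarith
  qed
  have b1b: "- (\<bar>b1\<bar> * e) \<le> b1 * (x - 1)" using bb[of b1 1] by simp
  have b2b: "- (\<bar>b2\<bar> * (real p * e)) \<le> b2 * (x^p - 1)" by (rule bb)
  have b3b: "- (\<bar>b3\<bar> * (real q * e)) \<le> b3 * (x^q - 1)" by (rule bb)
  have eq: "lfun p q b1 b2 b3 x - (b1 + b2 + b3) = b1 * (x - 1) + b2 * (x^p - 1) + b3 * (x^q - 1)
     - (1/2)*(x * ln x) - (1/2) * (e * ln e)"
    unfolding lfun_assoc x_def by (simp add: algebra_simps)
  have "A * e = \<bar>b1\<bar> * e + \<bar>b2\<bar> * (real p * e) + \<bar>b3\<bar> * (real q * e)"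
    unfolding A_def by (simp add: algebra_simps)
  hence "lfun p q b1 b2 b3 x - (b1 + b2 + b3) \<ge> e/2"
    using eq b1b b2b b3b le t by (simp add: algebra_simps)
  thus ?thesis using e0 e1 unfolding x_def by (intro exI[of _ "1-e"]) auto
qed

lemma max_interior:
  assumes "1 \<le> p" "1 \<le> q" "is_global_max p q b1 b2 b3 w"
  shows "0 < w \<and> w < 1"
proof -
  have w: "w \<in> {0..1}" and le: "\<And>v. v \<in> {0..1} \<Longrightarrow> lfun p q b1 b2 b3 v \<le> lfun p q b1 b2 b3 w"
    using assms(3) unfolding is_global_max_def by auto
  have "w \<noteq> 0"
  proof
    assume "w = 0"
    obtain x where "0 < x" "x < 1" "lfun p q b1 b2 b3 x > 0" using near0[OF assms(1,2)] by blast
    thus False using le[of x] \<open>w = 0\<close> lfun_0[OF assms(1,2)] by auto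
  qed
  moreover have "w \<noteq> 1"
  proof
    assume "w = 1"
    obtain x where "0 < x" "x < 1" "lfun p q b1 b2 b3 x > b1 + b2 + b3" using near1 by blast
    thus False using le[of x] \<open>w = 1\<close> lfun_1 by auto
  qed
  ultimately show ?thesis using w by auto
qed

lemma fermat:
  assumes "1 \<le> p" "1 \<le> q" "is_global_max p q b1 b2 b3 w"
  shows "dl p q b1 b2 b3 w = 0"
proof -
  have w: "0 < w" "w < 1" using max_interior[OF assms] by auto
  have le: "\<And>v. v \<in> {0..1} \<Longrightarrow> lfun p q b1 b2 b3 v \<le> lfun p q b1 b2 b3 w"
    using assms(3) unfolding is_global_max_def by auto
  show ?thesis
  proof (rule DERIV_local_max[OF lfun_deriv[OF w]])
    show "0 < min w (1-w)" using w by simp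
    show "\<forall>y. \<bar>w - y\<bar> < min w (1 - w) \<longrightarrow> lfun p q b1 b2 b3 y \<le> lfun p q b1 b2 b3 w"
      by (auto intro!: le)
  qed
qed

lemma term_bound: fixes x y b :: real assumes "0 \<le> x" "x \<le> y" "y \<le> 1"
  shows "- (real k * real k * max b 0) * (y - x) \<le> real k * b * (x^(k-1) - y^(k-1))"
proof -
  define D where "D = y^(k-1) - x^(k-1)"
  have D0: "0 \<le> D" unfolding D_def using assms by (simp add: power_mono)
  have "D \<le> real (k-1) * (y - x)" unfolding D_def using assms by (intro pow_diff_le) auto
  also have "\<dots> \<le> real k * (y - x)" using assms by (intro mult_right_mono) auto
  finally have D1: "D \<le> real k * (y - x)" .
  have "b * D \<le> max b 0 * D" using D0 by (intro mult_right_mono) auto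
  also have "\<dots> \<le> max b 0 * (real k * (y - x))" using D1 by (intro mult_left_mono) auto
  finally have "real k * (b * D) \<le> real k * (max b 0 * (real k * (y - x)))"
    by (intro mult_left_mono) auto
  thus ?thesis unfolding D_def by (simp add: algebra_simps)
qed

definition Kc :: "nat \<Rightarrow> nat \<Rightarrow> real \<Rightarrow> real \<Rightarrow> real" where
  "Kc p q b2 b3 = real p * real p * max b2 0 + real q * real q * max b3 0"

lemma dl_mono:
  assumes "0 < x" "x < y" "y < 1"
  shows "dl p q b1 b2 b3 x - dl p q b1 b2 b3 y \<ge> (y - x) * (1/(2*y) + 1/(2*(1-x)) - Kc p q b2 b3)"
proof -
  have t2: "- (real p * real p * max b2 0) * (y - x) \<le> real p * b2 * (x^(p-1) - y^(p-1))"
    using assms by (intro term_bound) auto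
  have t3: "- (real q * real q * max b3 0) * (y - x) \<le> real q * b3 * (x^(q-1) - y^(q-1))"
    using assms by (intro term_bound) auto
  have "ln (x/y) \<le> x/y - 1" using assms by (intro ln_le_minus_one) auto
  hence l1: "ln y - ln x \<ge> (y - x)/y" using assms by (simp add: ln_div field_simps)
  have "ln ((1-y)/(1-x)) \<le> (1-y)/(1-x) - 1" using assms by (intro ln_le_minus_one) auto
  hence l2: "ln (1-x) - ln (1-y) \<ge> (y - x)/(1-x)" using assms by (simp add: ln_div field_simps)
  have eq: "dl p q b1 b2 b3 x - dl p q b1 b2 b3 y = real p * b2 * (x^(p-1) - y^(p-1))
     + real q * b3 * (x^(q-1) - y^(q-1)) + (ln y - ln x)/2 + (ln (1-x) - ln (1-y))/2"
    unfolding dl_def by (simp add: field_simps)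
  have eq2: "(y - x) * (1/(2*y) + 1/(2*(1-x)) - Kc p q b2 b3) =
     ((y-x)/y)/2 + ((y-x)/(1-x))/2 - (real p * real p * max b2 0) * (y - x)
       - (real q * real q * max b3 0) * (y - x)"
    unfolding Kc_def using assms by (simp add: field_simps)
  define P where "P = real p * real p * max b2 0 * (y - x)"
  define Q where "Q = real q * real q * max b3 0 * (y - x)"
  define T2 where "T2 = real p * b2 * (x^(p-1) - y^(p-1))"
  define T3 where "T3 = real q * b3 * (x^(q-1) - y^(q-1))"
  have t2': "- P \<le> T2" using t2 unfolding P_def T2_def by simp
  have t3': "- Q \<le> T3" using t3 unfolding Q_def T3_def by simp
  show ?thesis unfolding eq eq2 P_def[symmetric] Q_def[symmetric] T2_def[symmetric] T3_def[symmetric]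
    using t2' t3' l1 l2 by argo
qed

lemma no_two_close:
  assumes "1 \<le> p" "1 \<le> q" "is_global_max p q b1 b2 b3 u" "is_global_max p q b1 b2 b3 v" "u < v"
    and "Kc p q b2 b3 < 1/(2*v) \<or> Kc p q b2 b3 < 1/(2*(1-u))"
  shows False
proof -
  have u: "0 < u" "u < 1" using max_interior[OF assms(1,2,3)] by auto
  have v: "0 < v" "v < 1" using max_interior[OF assms(1,2,4)] by auto
  have "dl p q b1 b2 b3 u = 0" "dl p q b1 b2 b3 v = 0"
    using fermat[OF assms(1,2,3)] fermat[OF assms(1,2,4)] by auto
  moreover have "dl p q b1 b2 b3 u - dl p q b1 b2 b3 v \<ge> (v - u) * (1/(2*v) + 1/(2*(1-u)) - Kc p q b2 b3)"
    using u v assms(5) by (intro dl_mono) auto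
  moreover have "0 < 1/(2*v)" "0 < 1/(2*(1-u))" using u v by auto
  hence "0 < 1/(2*v) + 1/(2*(1-u)) - Kc p q b2 b3" using assms(6) by linarith
  hence "0 < (v - u) * (1/(2*v) + 1/(2*(1-u)) - Kc p q b2 b3)" using assms(5) by simp
  ultimately show False by linarith
qed

lemma inv_bound: fixes v a :: real assumes "0 < v" "v \<le> exp a" shows "exp (-a)/2 \<le> 1/(2*v)"
proof -
  have "1/exp a \<le> 1/v" using assms by (intro divide_left_mono) auto
  moreover have "exp (-a) = 1/exp a" by (simp add: exp_minus field_simps)
  ultimately show ?thesis by simp
qed

lemma div_step: fixes w c L :: real assumes "0 < w" "c * w \<le> w * L" shows "c \<le> L"
  using assms by (simp add: mult.commute)

lemma core_ord:
  fixes p q :: nat and b1 b2 b3 :: real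
  assumes pq: "2 \<le> p" "p < q" and b3: "0 \<le> b3"
    and C0: "exp (1 + b1) < 1/2"
    and C1: "1 < -b1 - b3"
    and C2: "real q * real q * (-b1 + 2) < exp (-b1 - 1)/2"
    and C3: "real q * real q \<le> exp (-b1 - 1)"
    and C4: "real q * real q * b3 < exp (2*(-b1-b3) - 1)/2"
    and gu: "is_global_max p q b1 b2 b3 u" and gv: "is_global_max p q b1 b2 b3 v" and uv: "u < v"
  shows "\<bar>b1 + b2 + b3\<bar> \<le> 3 * sqrt (exp (1 + b1))"
proof -
  define s where "s = b1 + b2 + b3"
  define \<eta> where "\<eta> = exp (1 + b1)"
  have p1: "1 \<le> p" and q1: "1 \<le> q" using pq by auto
  have B0: "0 < -b1" using C1 b3 by linarith
  have eta0: "0 < \<eta>" unfolding \<eta>_def by simp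
  have eta1: "\<eta> < 1/2" using C0 unfolding \<eta>_def .
  have seta1: "sqrt \<eta> \<le> 1" using eta1 by simp
  have mx: "0 < w \<and> w < 1 \<and> 0 \<le> lfun p q b1 b2 b3 w \<and> s \<le> lfun p q b1 b2 b3 w"
    if g: "is_global_max p q b1 b2 b3 w" for w
  proof -
    have "lfun p q b1 b2 b3 0 \<le> lfun p q b1 b2 b3 w" "lfun p q b1 b2 b3 1 \<le> lfun p q b1 b2 b3 w"
      using g unfolding is_global_max_def by auto
    thus ?thesis using max_interior[OF p1 q1 g] lfun_0[OF p1 q1] lfun_1 unfolding s_def by auto
  qed
  have pw: "w^p \<le> w^2" "w^q \<le> w^2" "w^q \<le> w" "0 \<le> w^p" if "0 < w" "w < 1" for w :: real
  proof -
    show "w^p \<le> w^2" using that pq by (intro pow_le_sq) auto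
    show "w^q \<le> w^2" using that pq by (intro pow_le_sq) auto
    show "w^q \<le> w" using power_decreasing[of 1 q w] that q1 by auto
    show "0 \<le> w^p" using that by simp
  qed
  have uv01: "0 < u" "u < 1" "0 < v" "v < 1" using mx[OF gu] mx[OF gv] by auto
  show ?thesis
  proof (cases "b2 < 0")
    case True
    define c where "c = -b1 - b3"
    have bnd: "c * w \<le> Hf w" if g: "is_global_max p q b1 b2 b3 w" for w
    proof -
      have w: "0 < w" "w < 1" "0 \<le> lfun p q b1 b2 b3 w" using mx[OF g] by auto
      have "b2 * w^p \<le> 0" using True pw(4)[OF w(1,2)] by (simp add: mult_nonpos_nonneg)
      moreover have "b3 * w^q \<le> b3 * w" using pw(3)[OF w(1,2)] b3 by (intro mult_left_mono)
      moreover have "c * w = - (b1 * w) - b3 * w" unfolding c_def by (simp add: algebra_simps)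
      ultimately show ?thesis using w(3) unfolding lfun_Hf by argo
    qed
    have small: "w \<le> exp (1 - 2*c)" if g: "is_global_max p q b1 b2 b3 w" for w
    proof -
      have w: "0 < w" "w < 1" using mx[OF g] by auto
      have "w < 1/2"
      proof (rule ccontr)
        assume "\<not> w < 1/2"
        have c1: "1 < c" using C1 unfolding c_def .
        have "c * (1/2) \<le> c * w" using c1 \<open>\<not> w < 1/2\<close> by (intro mult_left_mono) auto
        moreover have "Hf w \<le> 1/2" using Hf_half[OF w] .
        ultimately show False using bnd[OF g] c1 by linarith
      qed
      have "c * w \<le> (1/2) * (- (w * ln w)) + w/2" using bnd[OF g] Hf_le1[OF w] by (rule order_trans)
      also have "\<dots> = w * ((1 - ln w)/2)" by (simp add: algebra_simps)
      finally have "c * w \<le> w * ((1 - ln w)/2)" .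
      hence "c \<le> (1 - ln w)/2" by (rule div_step[OF w(1)])
      hence "2*c \<le> 1 - ln w" by simp
      thus ?thesis by (rule le_exp_of_ln[OF w(1)])
    qed
    have ee: "-(1 - 2*c) = 2*(-b1-b3) - 1" unfolding c_def by simp
    have "Kc p q b2 b3 = real q * real q * b3" unfolding Kc_def using True b3 by simp
    also have "\<dots> < exp (-(1 - 2*c))/2" using C4 unfolding ee .
    also have "\<dots> \<le> 1/(2*v)" by (rule inv_bound[OF uv01(3) small[OF gv]])
    finally have "Kc p q b2 b3 < 1/(2*v)" .
    hence False using no_two_close[OF p1 q1 gu gv uv] by auto
    thus ?thesis by simp
  next
    case False
    hence b2: "0 \<le> b2" by simp
    have sb: "s - b1 = b2 + b3" unfolding s_def by simp
    have G1: "lfun p q b1 b2 b3 w \<le> b1*w + (s - b1)*w^2 + Hf w" if w: "0 < w" "w < 1" for w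
    proof -
      have "b2 * w^p \<le> b2 * w^2" using pw(1)[OF w] b2 by (intro mult_left_mono)
      moreover have "b3 * w^q \<le> b3 * w^2" using pw(2)[OF w] b3 by (intro mult_left_mono)
      moreover have "(s - b1)*w^2 = b2 * w^2 + b3 * w^2" unfolding sb by (simp add: algebra_simps)
      ultimately show ?thesis unfolding lfun_Hf by argo
    qed
    have G2: "b1*w + (s - b1)*w^2 \<le> s*w" if w: "0 < w" "w < 1" for w
    proof -
      have "0 \<le> (s - b1) * (w * (1 - w))" unfolding sb using b2 b3 w by (intro mult_nonneg_nonneg) auto
      thus ?thesis by (simp add: algebra_simps power2_eq_square)
    qed
    have G3: "b1*w + (s - b1)*w^2 = s * w^2 + b1 * (w * (1 - w))" for w
      by (simp add: algebra_simps power2_eq_square)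
    have loc: "(-b1) * (w * (1 - w)) \<le> Hf w" if g: "is_global_max p q b1 b2 b3 w" for w
    proof -
      have w: "0 < w" "w < 1" "0 \<le> lfun p q b1 b2 b3 w" "s \<le> lfun p q b1 b2 b3 w" using mx[OF g] by auto
      have "s * w^2 \<le> lfun p q b1 b2 b3 w"
      proof (cases "0 \<le> s")
        case True
        have "w^2 \<le> 1" using w by (simp add: power_le_one)
        hence "s * w^2 \<le> s * 1" using True by (intro mult_left_mono) auto
        thus ?thesis using w(4) by simp
      next
        case False
        hence "s * w^2 \<le> 0" by (simp add: mult_nonpos_nonneg)
        thus ?thesis using w(3) by simp
      qed
      thus ?thesis using G1[OF w(1,2)] G3[of w] by argo
    qed
    have smallw: "w \<le> \<eta>" if g: "is_global_max p q b1 b2 b3 w" and wh: "w < 1/2" for w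
    proof -
      have w: "0 < w" "w < 1" using mx[OF g] by auto
      have "(-b1) * (w/2) \<le> (-b1) * (w * (1 - w))" using B0 w wh by (intro mult_left_mono) auto
      moreover have "(-b1) * (w/2) = ((-b1) * w)/2" by simp
      moreover have "w * (1 - ln w) = w - w * ln w" by (simp add: algebra_simps)
      ultimately have "(-b1) * w \<le> w * (1 - ln w)" using loc[OF g] Hf_le1[OF w] by argo
      hence "-b1 \<le> 1 - ln w" by (rule div_step[OF w(1)])
      hence "w \<le> exp (1 - (-b1))" by (rule le_exp_of_ln[OF w(1)])
      thus ?thesis unfolding \<eta>_def by simp
    qed
    have largew: "1 - w \<le> \<eta>" if g: "is_global_max p q b1 b2 b3 w" and wh: "1/2 \<le> w" for w
    proof -
      have w: "0 < w" "w < 1" using mx[OF g] by auto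
      have "(-b1) * ((1-w)/2) \<le> (-b1) * (w * (1 - w))" using B0 w wh by (intro mult_left_mono) auto
      moreover have "(-b1) * ((1-w)/2) = ((-b1) * (1-w))/2" by simp
      moreover have "(1-w) * (1 - ln (1-w)) = (1-w) - (1-w) * ln (1-w)" by (simp add: algebra_simps)
      ultimately have "(-b1) * (1-w) \<le> (1-w) * (1 - ln (1-w))" using loc[OF g] Hf_le2[OF w] by argo
      have w1: "0 < 1 - w" using w by simp
      hence "-b1 \<le> 1 - ln (1-w)" using \<open>(-b1) * (1-w) \<le> (1-w) * (1 - ln (1-w))\<close> by (rule div_step)
      hence "1 - w \<le> exp (1 - (-b1))" by (rule le_exp_of_ln[OF w1])
      thus ?thesis unfolding \<eta>_def by simp
    qed
    have UP: "s \<le> 2 * sqrt \<eta>" if g: "is_global_max p q b1 b2 b3 w" and wh: "w < 1/2" for w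
    proof (cases "s \<le> 0")
      case True thus ?thesis using real_sqrt_ge_zero[of \<eta>] eta0 by linarith
    next
      case False
      have w: "0 < w" "w < 1" "s \<le> lfun p q b1 b2 b3 w" using mx[OF g] by auto
      have "b1 * (w * (1 - w)) \<le> 0" using B0 w by (simp add: mult_nonpos_nonneg)
      moreover have "sqrt w \<le> sqrt \<eta>" using smallw[OF g wh] by simp
      ultimately have "s \<le> s * w^2 + 3/2 * sqrt \<eta>" using G1[OF w(1,2)] G3[of w] Hf_sqrt1[OF w(1,2)] w(3)
        by argo
      moreover have "w * w \<le> (1/2) * (1/2)" using w wh by (intro mult_mono) auto
      hence "w^2 \<le> 1/4" by (simp add: power2_eq_square)
      hence "s * w^2 \<le> s * (1/4)" using False by (intro mult_left_mono) auto
      ultimately show ?thesis by argo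
    qed
    have LO: "- 3 * sqrt \<eta> \<le> s" if g: "is_global_max p q b1 b2 b3 w" and wh: "1/2 \<le> w" for w
    proof (cases "0 \<le> s")
      case True thus ?thesis using real_sqrt_ge_zero[of \<eta>] eta0 by linarith
    next
      case False
      have w: "0 < w" "w < 1" "0 \<le> lfun p q b1 b2 b3 w" using mx[OF g] by auto
      have "sqrt (1-w) \<le> sqrt \<eta>" using largew[OF g wh] by simp
      hence "0 \<le> s * w + 3/2 * sqrt \<eta>" using G1[OF w(1,2)] G2[OF w(1,2)] Hf_sqrt2[OF w(1,2)] w(3)
        by argo
      moreover have "s * (2 * w) \<le> s * 1" using False wh by (intro mult_left_mono_neg) auto
      ultimately show ?thesis by argo
    qed
    have KK: "Kc p q b2 b3 \<le> real q * real q * (s - b1)"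
    proof -
      have "real p * real p \<le> real q * real q" using pq by (intro mult_mono) auto
      hence "real p * real p * b2 \<le> real q * real q * b2" using b2 by (intro mult_right_mono)
      thus ?thesis unfolding Kc_def sb using b2 b3 by (simp add: algebra_simps)
    qed
    have qq: "0 \<le> real q * real q" by simp
    have e2: "-(1 + b1) = -b1 - 1" by simp
    show ?thesis
    proof (cases "u < 1/2")
      case uh: True
      show ?thesis
      proof (cases "v < 1/2")
        case vh: True
        have "s \<le> 2" using UP[OF gu uh] seta1 by linarith
        hence "Kc p q b2 b3 \<le> real q * real q * (-b1 + 2)"
          using KK qq mult_left_mono[of "s - b1" "-b1 + 2" "real q * real q"] by linarith
        also have "\<dots> < exp (-(1 + b1))/2" using C2 unfolding e2 .
        also have "\<dots> \<le> 1/(2*v)" using inv_bound[OF uv01(3) smallw[OF gv vh, unfolded \<eta>_def]] .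
        finally have "Kc p q b2 b3 < 1/(2*v)" .
        hence False using no_two_close[OF p1 q1 gu gv uv] by auto
        thus ?thesis by simp
      next
        case vh: False
        have "s \<le> 2 * sqrt \<eta>" "- 3 * sqrt \<eta> \<le> s" using UP[OF gu uh] LO[OF gv] vh by auto
        thus ?thesis unfolding s_def \<eta>_def by (simp add: abs_le_iff) 
      qed
    next
      case uh: False
      hence vh: "1/2 \<le> v" using uv by simp
      have uh': "1/2 \<le> u" using uh by simp
      have u1: "0 < 1 - u" using uv01 by simp
      have "Kc p q b2 b3 < 1/(2*(1-u))"
      proof (cases "s \<le> 0")
        case True
        hence "Kc p q b2 b3 \<le> real q * real q * (-b1 + 2)"
          using KK qq mult_left_mono[of "s - b1" "-b1 + 2" "real q * real q"] by linarith
        also have "\<dots> < exp (-(1 + b1))/2" using C2 unfolding e2 .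
        also have "\<dots> \<le> 1/(2*(1-u))" using inv_bound[OF u1 largew[OF gu uh', unfolded \<eta>_def]] .
        finally show ?thesis .
      next
        case False
        have w: "s \<le> lfun p q b1 b2 b3 u" using mx[OF gu] by auto
        have "s - (b1*u + (s - b1)*u^2) = (1-u) * (s*(1+u) - b1*u)" by (simp add: algebra_simps power2_eq_square)
        moreover have "(1-u) * ((1 - ln (1-u))/2) = (1/2) * (- ((1-u) * ln (1-u))) + (1-u)/2"
          by (simp add: field_simps)
        ultimately have "(1-u) * (s*(1+u) - b1*u) \<le> (1-u) * ((1 - ln (1-u))/2)"
          using w G1[OF uv01(1,2)] Hf_le2[OF uv01(1,2)] by argo
        hence r: "s*(1+u) - b1*u \<le> (1 - ln (1-u))/2"
          using uv01 by (simp add: mult_le_cancel_left_pos)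
        have "s * 1 \<le> s * (1 + u)" using False uv01 by (intro mult_left_mono) auto
        moreover have "(-b1) * (1/2) \<le> (-b1) * u" using B0 uh' by (intro mult_left_mono) auto
        ultimately have "2*s - b1 \<le> 1 - ln (1-u)" using r by argo
        hence "1 - u \<le> exp (1 - (2*s - b1))" by (rule le_exp_of_ln[OF u1])
        hence ib: "exp (-(1 - (2*s - b1)))/2 \<le> 1/(2*(1-u))" by (rule inv_bound[OF u1])
        have "exp (-(1 - (2*s - b1))) = exp (-b1 - 1) * exp (2*s)" by (simp add: exp_add[symmetric] algebra_simps)
        moreover have "1 + 2*s \<le> exp (2*s)" by (rule exp_ge_add_one_self)
        hence "exp (-b1 - 1) * (1 + 2*s) \<le> exp (-b1 - 1) * exp (2*s)" by (intro mult_left_mono) auto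
        moreover have "real q * real q * s \<le> exp (-b1 - 1) * s" using C3 False by (intro mult_right_mono) auto
        moreover have "exp (-b1 - 1) * (1 + 2*s) = exp (-b1 - 1) + 2 * (exp (-b1 - 1) * s)" by (simp add: algebra_simps)
        moreover have "real q * real q * (s - b1) = real q * real q * s + real q * real q * (-b1)"
          by (simp add: algebra_simps)
        moreover have "real q * real q * (-b1) \<le> real q * real q * (-b1 + 2)" using qq by (intro mult_left_mono) auto
        ultimately show ?thesis using KK ib C2 by argo
      qed
      hence False using no_two_close[OF p1 q1 gu gv uv] by auto
      thus ?thesis by simp
    qed
  qed
qed

lemma core:
  fixes p q :: nat and b1 b2 b3 :: real
  assumes pq: "2 \<le> p" "p < q" and b3: "0 \<le> b3"
    and C0: "exp (1 + b1) < 1/2"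
    and C1: "1 < -b1 - b3"
    and C2: "real q * real q * (-b1 + 2) < exp (-b1 - 1)/2"
    and C3: "real q * real q \<le> exp (-b1 - 1)"
    and C4: "real q * real q * b3 < exp (2*(-b1-b3) - 1)/2"
    and tm: "two_maximizers p q b1 b2 b3"
  shows "\<bar>b1 + b2 + b3\<bar> \<le> 3 * sqrt (exp (1 + b1))"
proof -
  obtain u v where uv: "u \<noteq> v" and gu: "is_global_max p q b1 b2 b3 u" and gv: "is_global_max p q b1 b2 b3 v"
    using tm unfolding two_maximizers_def by blast
  show ?thesis
  proof (cases "u < v")
    case True
    show ?thesis by (rule core_ord[OF pq b3 C0 C1 C2 C3 C4 gu gv True])
  next
    case False
    hence "v < u" using uv by simp
    show ?thesis by (rule core_ord[OF pq b3 C0 C1 C2 C3 C4 gv gu \<open>v < u\<close>])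
  qed
qed

theorem corollary4:
  fixes p q :: nat and b3 :: real
  assumes "2 \<le> p" and "p < q" and "q \<le> 5 * p - 1" and "b3 \<ge> 0"
    and "\<exists>!u. 0 < u \<and> u < 1 \<and>
      b3 = (real p * u - (real p - 1)) /
           (2 * real q * (real q - 1) * (real q - real p) * u ^ (q - 1) * (1 - u)^2)"
    and "\<forall>b1 < beta1c p q b3. \<exists>!b2. two_maximizers p q b1 b2 b3"
  shows "((\<lambda>b1. \<bar>transition_curve p q b3 b1 + b1 + b3\<bar>) \<longlongrightarrow> 0) at_bot"
proof -
  have e0: "eventually (\<lambda>b1::real. b1 < beta1c p q b3) at_bot"
    unfolding eventually_at_bot_dense by blast
  have e1: "eventually (\<lambda>b1::real. exp (1 + b1) < 1/2) at_bot" by real_asymp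
  have e2: "eventually (\<lambda>b1::real. 1 < -b1 - b3) at_bot" by real_asymp
  have e3: "eventually (\<lambda>b1::real. real q * real q * (-b1 + 2) < exp (-b1 - 1)/2) at_bot" by real_asymp
  have e4: "eventually (\<lambda>b1::real. real q * real q < exp (-b1 - 1)) at_bot" by real_asymp
  have e5: "eventually (\<lambda>b1::real. real q * real q * b3 < exp (2*(-b1-b3) - 1)/2) at_bot" by real_asymp
  have ev: "eventually (\<lambda>b1. \<bar>transition_curve p q b3 b1 + b1 + b3\<bar> \<le> 3 * sqrt (exp (1 + b1))) at_bot"
    using e0 e1 e2 e3 e4 e5
  proof eventually_elim
    case (elim b1)
    have "\<exists>!b2. two_maximizers p q b1 b2 b3" using assms(6) elim(1) by blast
    hence tm: "two_maximizers p q b1 (transition_curve p q b3 b1) b3"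
      unfolding transition_curve_def by (rule theI')
    have "\<bar>b1 + transition_curve p q b3 b1 + b3\<bar> \<le> 3 * sqrt (exp (1 + b1))"
      using core[OF assms(1,2,4) elim(2,3,4) less_imp_le[OF elim(5)] elim(6) tm] .
    thus ?case by (simp add: add.commute add.left_commute)
  qed
  show ?thesis
  proof (rule tendsto_sandwich[of "\<lambda>_. 0" _ at_bot "\<lambda>b1. 3 * sqrt (exp (1 + b1))"])
    show "\<forall>\<^sub>F n in at_bot. 0 \<le> \<bar>transition_curve p q b3 n + n + b3\<bar>" by simp
    show "\<forall>\<^sub>F n in at_bot. \<bar>transition_curve p q b3 n + n + b3\<bar> \<le> 3 * sqrt (exp (1 + n))" using ev .
    show "((\<lambda>_. 0) \<longlongrightarrow> (0::real)) at_bot" by simp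
    show "((\<lambda>b1. 3 * sqrt (exp (1 + b1))) \<longlongrightarrow> 0) at_bot" by real_asymp
  qed
qed

end
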